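(* Let $K$ be a field, $w(x)\in K[x]$ with $d=\deg w\ge2$, $\phi$ the $K$-algebra endomorphism of $K[x]$ with $\phi(x)=w(x)$, and $\delta=\mathrm{id}-\phi$. Let $W=K[w(x)]$ and $U$ the $K$-subspace spanned by $x^m$ for positive integers $m$ not divisible by $d$; for $f\in K[x]$ write uniquely $f=f_1+f_2$ with $f_1\in U$, $f_2\in W$, and set $\ell(f)=\deg f_1$ if $f_1\ne0$, $\ell(f)=0$ otherwise. Then for every nonzero $f\in\operatorname{Im}\delta$: 1) if $f\in W$, say $f(x)=\tilde f(w(x))$ with $\tilde f\in K[x]$, then $\tilde f\in\operatorname{Im}\delta$; 2) if $f\notin W$, then $\deg f\ge d\,\ell(f)\ge d$.
   Context: $\mathrm{id}$ is the identity map of $K[x]$. *)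

theory Defs
  imports "HOL-Computational_Algebra.Polynomial"
begin

definition delta_op :: "'a::field poly \<Rightarrow> 'a poly \<Rightarrow> 'a poly" where
  "delta_op w f = f - pcompose f w"

definition im_delta :: "'a::field poly \<Rightarrow> 'a poly set" where
  "im_delta w = range (delta_op w)"

definition W_sub :: "'a::field poly \<Rightarrow> 'a poly set" where
  "W_sub w = {pcompose g w | g. True}"

definition U_sub :: "'a::field poly \<Rightarrow> 'a poly set" where
  "U_sub w = {f. \<forall>m. coeff f m \<noteq> 0 \<longrightarrow> 0 < m \<and> \<not> degree w dvd m}"

definition U_part :: "'a::field poly \<Rightarrow> 'a poly \<Rightarrow> 'a poly" where
  "U_part w f = (THE f1. f1 \<in> U_sub w \<and> f - f1 \<in> W_sub w)"

definition ell :: "'a::field poly \<Rightarrow> 'a poly \<Rightarrow> nat" where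
  "ell w f = (if U_part w f = 0 then 0 else degree (U_part w f))"

end

theory Submission
  imports Defs
begin

lemma W_in: "pcompose g w \<in> W_sub w"
  unfolding W_sub_def by blast

lemma W_diff: "a \<in> W_sub w \<Longrightarrow> b \<in> W_sub w \<Longrightarrow> a - b \<in> W_sub w"
  unfolding W_sub_def by (auto simp: pcompose_diff[symmetric])

lemma W_add: "a \<in> W_sub w \<Longrightarrow> b \<in> W_sub w \<Longrightarrow> a + b \<in> W_sub w"
  unfolding W_sub_def by (auto simp: pcompose_add[symmetric])

lemma W_smult: "a \<in> W_sub w \<Longrightarrow> smult c a \<in> W_sub w"
  unfolding W_sub_def by (auto simp: pcompose_smult[symmetric])

lemma U_add: "a \<in> U_sub w \<Longrightarrow> b \<in> U_sub w \<Longrightarrow> a + b \<in> U_sub w"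
  unfolding U_sub_def
proof (intro CollectI allI impI)
  fix m assume "a \<in> {f. \<forall>m. coeff f m \<noteq> 0 \<longrightarrow> 0 < m \<and> \<not> degree w dvd m}"
    "b \<in> {f. \<forall>m. coeff f m \<noteq> 0 \<longrightarrow> 0 < m \<and> \<not> degree w dvd m}" "coeff (a + b) m \<noteq> 0"
  moreover have "coeff a m \<noteq> 0 \<or> coeff b m \<noteq> 0" using \<open>coeff (a + b) m \<noteq> 0\<close> by auto
  ultimately show "0 < m \<and> \<not> degree w dvd m" by blast
qed

lemma U_diff: "a \<in> U_sub w \<Longrightarrow> b \<in> U_sub w \<Longrightarrow> a - b \<in> U_sub w"
  unfolding U_sub_def
proof (intro CollectI allI impI)
  fix m assume "a \<in> {f. \<forall>m. coeff f m \<noteq> 0 \<longrightarrow> 0 < m \<and> \<not> degree w dvd m}"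
    "b \<in> {f. \<forall>m. coeff f m \<noteq> 0 \<longrightarrow> 0 < m \<and> \<not> degree w dvd m}" "coeff (a - b) m \<noteq> 0"
  moreover have "coeff a m \<noteq> 0 \<or> coeff b m \<noteq> 0" using \<open>coeff (a - b) m \<noteq> 0\<close> by auto
  ultimately show "0 < m \<and> \<not> degree w dvd m" by blast
qed

lemma UW_inter:
  fixes f w :: "'a::field poly"
  assumes "degree w \<ge> 1" "f \<in> U_sub w" "f \<in> W_sub w"
  shows "f = 0"
proof (rule ccontr)
  assume nz: "f \<noteq> 0"
  from assms(3) obtain h where h: "f = pcompose h w" unfolding W_sub_def by blast
  have "degree f = degree h * degree w" using h degree_pcompose by metis
  hence "degree w dvd degree f" by simp
  moreover have "coeff f (degree f) \<noteq> 0" using nz by simp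
  ultimately show False using assms(2) unfolding U_sub_def by blast
qed

lemma deg_less:
  fixes h :: "'a::field poly"
  assumes "degree h \<le> n" "coeff h n = 0" "n > 0"
  shows "degree h < n"
proof (rule ccontr)
  assume "\<not> degree h < n"
  hence "degree h = n" using assms by simp
  hence "h = 0" using assms(2) by (metis leading_coeff_0_iff)
  thus False using \<open>degree h = n\<close> assms(3) by simp
qed

lemma decomp_exists:
  fixes f w :: "'a::field poly"
  assumes "degree w \<ge> 1"
  shows "\<exists>f1. f1 \<in> U_sub w \<and> f - f1 \<in> W_sub w \<and> degree f1 \<le> degree f"
proof (induction "degree f" arbitrary: f rule: less_induct)
  case less
  define n where "n = degree f"
  have U0: "(0::'a poly) \<in> U_sub w" unfolding U_sub_def by simp
  show ?case
  proof (cases "n = 0")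
    case True
    then obtain c where "f = [:c:]" unfolding n_def by (metis degree_eq_zeroE)
    hence "f - 0 \<in> W_sub w" using W_in[of "[:c:]" w] by simp
    thus ?thesis using U0 by force
  next
    case npos: False
    show ?thesis
    proof (cases "degree w dvd n")
      case True
      then obtain k where k: "n = degree w * k" by blast
      define q where "q = pcompose (monom (1::'a) k) w"
      have dq: "degree q = n" unfolding q_def using k degree_pcompose[of "monom (1::'a) k" w]
        by (simp add: degree_monom_eq mult.commute)
      have qnz: "q \<noteq> 0" using dq npos by auto
      define c where "c = lead_coeff f / lead_coeff q"
      define h where "h = f - smult c q"
      have lq: "coeff q n \<noteq> 0" using qnz unfolding dq[symmetric] by simp
      have "coeff h n = coeff f n - c * coeff q n" unfolding h_def by simp
      also have "\<dots> = 0" unfolding c_def using lq dq n_def by simp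
      finally have "coeff h n = 0" .
      moreover have "degree h \<le> n" unfolding h_def using dq n_def
        by (metis degree_diff_le degree_smult_le le_refl)
      ultimately have "degree h < degree f" using deg_less npos n_def by auto
      then obtain h1 where h1: "h1 \<in> U_sub w" "h - h1 \<in> W_sub w" "degree h1 \<le> degree h"
        using less by blast
      have "f - h1 = (h - h1) + smult c q" unfolding h_def by simp
      hence "f - h1 \<in> W_sub w" using h1(2) W_add W_smult W_in q_def by metis
      thus ?thesis using h1 \<open>degree h < degree f\<close> by (intro exI[of _ h1]) auto
    next
      case False
      define h where "h = f - monom (lead_coeff f) n"
      have "coeff h n = 0" unfolding h_def n_def by (simp add: coeff_monom)
      moreover have "degree h \<le> n" unfolding h_def n_def
        by (metis degree_diff_le degree_monom_le le_refl)
      ultimately have "degree h < degree f" using deg_less npos n_def by auto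
      then obtain h1 where h1: "h1 \<in> U_sub w" "h - h1 \<in> W_sub w" "degree h1 \<le> degree h"
        using less by blast
      have mU: "monom (lead_coeff f) n \<in> U_sub w" unfolding U_sub_def
        using False npos by (auto simp: coeff_monom split: if_splits)
      have "f - (h1 + monom (lead_coeff f) n) = h - h1" unfolding h_def by simp
      moreover have "degree (h1 + monom (lead_coeff f) n) \<le> degree f"
        using h1(3) \<open>degree h < degree f\<close> n_def
        by (metis degree_add_le degree_monom_le le_trans less_imp_le_nat)
      ultimately show ?thesis using h1 U_add[OF h1(1) mU] by metis
    qed
  qed
qed

lemma U_part_eq:
  fixes f w :: "'a::field poly"
  assumes "degree w \<ge> 1" "f1 \<in> U_sub w" "f - f1 \<in> W_sub w"
  shows "U_part w f = f1"
  unfolding U_part_def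
proof (rule the_equality)
  show "f1 \<in> U_sub w \<and> f - f1 \<in> W_sub w" using assms by simp
  fix g assume g: "g \<in> U_sub w \<and> f - g \<in> W_sub w"
  have "g - f1 \<in> U_sub w" using g assms U_diff by blast
  moreover have "g - f1 \<in> W_sub w" using W_diff[OF assms(3), of "f - g"] g by simp
  ultimately show "g = f1" using UW_inter[OF assms(1)] by fastforce
qed

lemma U_part_props:
  fixes f w :: "'a::field poly"
  assumes "degree w \<ge> 1"
  shows "U_part w f \<in> U_sub w \<and> f - U_part w f \<in> W_sub w \<and> degree (U_part w f) \<le> degree f"
  using decomp_exists[OF assms, of f] U_part_eq[OF assms] by metis

theorem lemma3p10:
  fixes w f :: "'a::field poly"
  assumes "degree w \<ge> 2"
    and "f \<in> im_delta w" and "f \<noteq> 0"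
  shows "(f \<in> W_sub w \<longrightarrow> (\<forall>ft. f = pcompose ft w \<longrightarrow> ft \<in> im_delta w))
       \<and> (f \<notin> W_sub w \<longrightarrow> degree f \<ge> degree w * ell w f \<and> degree w * ell w f \<ge> degree w)"
proof -
  have d1: "degree w \<ge> 1" using assms(1) by simp
  obtain g where g: "f = g - pcompose g w"
    using assms(2) unfolding im_delta_def delta_op_def by blast
  have P1: "f \<in> W_sub w \<longrightarrow> (\<forall>ft. f = pcompose ft w \<longrightarrow> ft \<in> im_delta w)"
  proof (intro impI allI)
    fix ft assume fW: "f \<in> W_sub w" and ft: "f = pcompose ft w"
    have "f + pcompose g w \<in> W_sub w" by (rule W_add[OF fW W_in])
    moreover have "f + pcompose g w = g" using g by (simp add: algebra_simps)
    ultimately have "g \<in> W_sub w" by simp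
    then obtain h where h: "g = pcompose h w" unfolding W_sub_def by blast
    have "pcompose ft w = f" using ft by (rule sym)
    also have "\<dots> = g - pcompose g w" by (rule g)
    also have "\<dots> = pcompose h w - pcompose (pcompose h w) w" unfolding h ..
    also have "\<dots> = pcompose (h - pcompose h w) w" by (rule pcompose_diff[symmetric])
    finally have eq: "pcompose ft w = pcompose (h - pcompose h w) w" .
    have "pcompose (ft - (h - pcompose h w)) w = pcompose ft w - pcompose (h - pcompose h w) w"
      by (rule pcompose_diff)
    also have "\<dots> = 0" by (simp only: eq diff_self)
    finally have "pcompose (ft - (h - pcompose h w)) w = 0" .
    moreover have "degree w > 0" using d1 by simp
    ultimately have "ft - (h - pcompose h w) = 0" by (rule pcompose_eq_0)
    hence "ft = delta_op w h" unfolding delta_op_def by simp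
    thus "ft \<in> im_delta w" unfolding im_delta_def by simp
  qed
  have P2: "f \<notin> W_sub w \<longrightarrow> degree f \<ge> degree w * ell w f \<and> degree w * ell w f \<ge> degree w"
  proof
    assume fW: "f \<notin> W_sub w"
    define g1 where "g1 = U_part w g"
    have g1: "g1 \<in> U_sub w" "g - g1 \<in> W_sub w" "degree g1 \<le> degree g"
      using U_part_props[OF d1, of g] g1_def by auto
    have eq: "f - g1 = (g - g1) - pcompose g w" using g by simp
    have "(g - g1) - pcompose g w \<in> W_sub w" by (rule W_diff[OF g1(2) W_in])
    hence "f - g1 \<in> W_sub w" unfolding eq .
    hence Uf: "U_part w f = g1" using U_part_eq[OF d1 g1(1)] by simp
    have g1nz: "g1 \<noteq> 0"
    proof
      assume "g1 = 0"
      hence "g \<in> W_sub w" using g1(2) by simp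
      hence "g - pcompose g w \<in> W_sub w" by (rule W_diff[OF _ W_in])
      hence "f \<in> W_sub w" using g by simp
      with fW show False by simp
    qed
    have ell: "ell w f = degree g1" unfolding ell_def using Uf g1nz by simp
    have c1: "coeff g1 (degree g1) \<noteq> 0" using g1nz by simp
    have c2: "\<forall>m. coeff g1 m \<noteq> 0 \<longrightarrow> 0 < m \<and> \<not> degree w dvd m"
      using g1(1) unfolding U_sub_def by simp
    have "0 < degree g1" using mp[OF spec[OF c2, of "degree g1"] c1] by (rule conjunct1)
    hence dg1: "degree g1 \<ge> 1" by simp
    hence dg: "degree g \<ge> 1" using g1(3) by simp
    have dgw: "degree (pcompose g w) = degree g * degree w" by (rule degree_pcompose)
    have "degree g * 1 < degree g * degree w" using dg assms(1)
      by (intro mult_strict_left_mono) auto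
    hence lt: "degree g < degree (- pcompose g w)" using dgw by simp
    have "degree f = degree (g + - pcompose g w)" using g by simp
    also have "\<dots> = degree (- pcompose g w)" by (rule degree_add_eq_right[OF lt])
    finally have "degree f = degree g * degree w" using dgw by simp
    moreover have "degree w * degree g1 \<le> degree w * degree g" using g1(3) by simp
    moreover have "degree w * 1 \<le> degree w * degree g1" using dg1 by (rule mult_le_mono2)
    ultimately show "degree f \<ge> degree w * ell w f \<and> degree w * ell w f \<ge> degree w"
      using ell by (simp add: mult.commute)
  qed
  show ?thesis using P1 P2 by blast
qed

end
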